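(* Let $\beta_1,\dots,\beta_N\in\mathbb R$ satisfy $(d-1)\sum_i\beta_i^2+(\sum_i\beta_i)^2=1$. Then for every $1\le i\le N$: (i) $\widetilde C_\beta\,\big(\omega_{(0,i)}\otimes I^{\otimes(N-1)}\big)=\frac1{(N-1)!}\sum_{a=1}^N\sum_{\sigma\in\Sigma_{a,i}}\beta_a\big((d-1)\beta_i+\sum_{b=1}^N\beta_b\big)\Pi_\sigma^\Gamma$; (ii) $\mathrm{Tr}\big[C_\beta\,(\omega_{(0,i)}\otimes I^{\otimes(N-1)})\big]=d\big((d-1)\beta_i+\sum_{j=1}^N\beta_j\big)^2$.
   Context: Fix $d\ge2$, $N\ge1$. Let $|\Omega\rangle=\sum_{i=1}^d|i\rangle\otimes|i\rangle$, $\omega=|\Omega\rangle\langle\Omega|$; tensor factors of $(\mathbb C^d)^{\otimes(N+1)}$ are labelled $0,\dots,N$ and $\omega_{(0,i)}\otimes I^{\otimes(N-1)}$ acts as $\omega$ on factors $0,i$ and identity elsewhere. For a permutation $\sigma$ of $\{0,\dots,N\}$, $\Pi_\sigma(v_0\otimes\cdots\otimes v_N)=v_{\sigma^{-1}(0)}\otimes\cdots\otimes v_{\sigma^{-1}(N)}$, $\Pi_\sigma^\Gamma$ is its partial transpose on factor $0$, and $\Sigma_{a,b}=\{\sigma:\sigma(0)=a,\sigma(b)=0\}$. $\widetilde C_\beta=\sum_{1\le a,b\le N}\sum_{\sigma\in\Sigma_{a,b}}\frac{\beta_a\beta_b}{(N-1)!}\Pi_\sigma^\Gamma$ and $C_\beta=\frac{d}{\binom{N+d-1}{N}}\frac{N+d-1}{N}\widetilde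 C_\beta$. *)

theory Defs
  imports Complex_Main "HOL-Combinatorics.Permutations"
begin

text \<open>Operators on (C^d)^{tensor (N+1)} as matrices indexed by computational basis
  states. A basis state is a function x with x k < d for k \<le> N (factor k) and x k = 0
  for k > N. Entry A x y is the matrix element <x|A|y>.\<close>

type_synonym op = "(nat \<Rightarrow> nat) \<Rightarrow> (nat \<Rightarrow> nat) \<Rightarrow> complex"

definition basis :: "nat \<Rightarrow> nat \<Rightarrow> (nat \<Rightarrow> nat) set" where
  "basis d N = {x. (\<forall>k\<le>N. x k < d) \<and> (\<forall>k>N. x k = 0)}"

definition opmul :: "nat \<Rightarrow> nat \<Rightarrow> op \<Rightarrow> op \<Rightarrow> op" where
  "opmul d N A B = (\<lambda>x y. \<Sum>z\<in>basis d N. A x z * B z y)"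

definition optrace :: "nat \<Rightarrow> nat \<Rightarrow> op \<Rightarrow> complex" where
  "optrace d N A = (\<Sum>x\<in>basis d N. A x x)"

text \<open>Pi_sigma maps basis vector |x> to |x o sigma^-1>, so <y|Pi_sigma|x> = 1 iff y (sigma k) = x k.\<close>
definition perm_op :: "(nat \<Rightarrow> nat) \<Rightarrow> op" where
  "perm_op \<sigma> = (\<lambda>y x. if (\<forall>k. y (\<sigma> k) = x k) then 1 else 0)"

definition ptrans :: "op \<Rightarrow> op" where
  "ptrans M = (\<lambda>x y. M (x(0 := y 0)) (y(0 := x 0)))"

text \<open>omega on factors 0,i tensor identity elsewhere; omega = |Omega><Omega|,
  |Omega> = sum_j |j>|j>.\<close>
definition omega_op :: "nat \<Rightarrow> op" where
  "omega_op i = (\<lambda>x y. if x 0 = x i \<and> y 0 = y i \<and> (\<forall>k. k \<noteq> 0 \<and> k \<noteq> i \<longrightarrow> x k = y k)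
                        then 1 else 0)"

definition Sigma_set :: "nat \<Rightarrow> nat \<Rightarrow> nat \<Rightarrow> (nat \<Rightarrow> nat) set" where
  "Sigma_set N a b = {\<sigma>. \<sigma> permutes {0..N} \<and> \<sigma> 0 = a \<and> \<sigma> b = 0}"

definition Ctilde :: "nat \<Rightarrow> (nat \<Rightarrow> real) \<Rightarrow> op" where
  "Ctilde N \<beta> = (\<lambda>x y. \<Sum>a\<in>{1..N}. \<Sum>b\<in>{1..N}. \<Sum>\<sigma>\<in>Sigma_set N a b.
      complex_of_real (\<beta> a * \<beta> b / fact (N - 1)) * ptrans (perm_op \<sigma>) x y)"

definition Cbeta :: "nat \<Rightarrow> nat \<Rightarrow> (nat \<Rightarrow> real) \<Rightarrow> op" where
  "Cbeta d N \<beta> = (\<lambda>x y. complex_of_real (real d / real ((N + d - 1) choose N)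
      * (real (N + d - 1) / real N)) * Ctilde N \<beta> x y)"

end

theory Submission imports Defs begin

lemma perm_fix_set:
  assumes "e \<notin> A" "b \<in> insert e A"
  shows "{\<sigma>. \<sigma> permutes insert e A \<and> \<sigma> e = b} = (\<lambda>p. transpose e b \<circ> p) ` {p. p permutes A}"
proof (intro equalityI subsetI)
  fix \<sigma> assume "\<sigma> \<in> {\<sigma>. \<sigma> permutes insert e A \<and> \<sigma> e = b}"
  hence s: "\<sigma> permutes insert e A" "\<sigma> e = b" by auto
  have "transpose e (\<sigma> e) \<circ> \<sigma> permutes A" by (rule permutes_insert_lemma[OF s(1)])
  moreover have "\<sigma> = transpose e b \<circ> (transpose e (\<sigma> e) \<circ> \<sigma>)"
    using s(2) by (simp add: fun_eq_iff)
  ultimately show "\<sigma> \<in> (\<lambda>p. transpose e b \<circ> p) ` {p. p permutes A}" by blast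
next
  fix \<sigma> assume "\<sigma> \<in> (\<lambda>p. transpose e b \<circ> p) ` {p. p permutes A}"
  then obtain p where p: "p permutes A" "\<sigma> = transpose e b \<circ> p" by auto
  have "p permutes insert e A" using p(1) by (rule permutes_subset) auto
  hence "\<sigma> permutes insert e A" using p(2) assms(2) by (simp add: permutes_compose permutes_swap_id)
  moreover have "p e = e" using p(1) assms(1) by (simp add: permutes_not_in)
  ultimately show "\<sigma> \<in> {\<sigma>. \<sigma> permutes insert e A \<and> \<sigma> e = b}" using p(2) by simp
qed

lemma inj_transp_comp: "inj_on (\<lambda>p. transpose e b \<circ> p) S"
proof (rule inj_onI)
  fix p q assume "transpose e b \<circ> p = transpose e b \<circ> q"
  hence "transpose e b \<circ> (transpose e b \<circ> p) = transpose e b \<circ> (transpose e b \<circ> q)" by simp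
  thus "p = q" by (simp only: o_assoc transpose_comp_involutory id_o)
qed

lemma sum_perm_fix:
  assumes "e \<notin> A" "b \<in> insert e A"
  shows "(\<Sum>\<sigma>\<in>{\<sigma>. \<sigma> permutes insert e A \<and> \<sigma> e = b}. G \<sigma>) = (\<Sum>p\<in>{p. p permutes A}. G (transpose e b \<circ> p))"
  unfolding perm_fix_set[OF assms] by (subst sum.reindex[OF inj_transp_comp]) simp

lemma sum_perm_insert:
  assumes "finite A" "e \<notin> A"
  shows "(\<Sum>\<sigma>\<in>{\<sigma>. \<sigma> permutes insert e A}. G \<sigma>) = (\<Sum>b\<in>insert e A. \<Sum>p\<in>{p. p permutes A}. G (transpose e b \<circ> p))"
proof -
  have fin: "finite {\<sigma>. \<sigma> permutes insert e A}" using assms by (simp add: finite_permutations)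
  have "(\<Sum>\<sigma>\<in>{\<sigma>. \<sigma> permutes insert e A}. G \<sigma>) = (\<Sum>\<sigma>\<in>{\<sigma>. \<sigma> permutes insert e A}. \<Sum>b\<in>insert e A. if \<sigma> e = b then G \<sigma> else 0)"
  proof (rule sum.cong[OF refl])
    fix \<sigma> assume "\<sigma> \<in> {\<sigma>. \<sigma> permutes insert e A}"
    hence "\<sigma> e \<in> insert e A" using permutes_in_image[of \<sigma> "insert e A" e] by simp
    thus "G \<sigma> = (\<Sum>b\<in>insert e A. if \<sigma> e = b then G \<sigma> else 0)"
      using assms(1) by (simp add: sum.delta)
  qed
  also have "\<dots> = (\<Sum>b\<in>insert e A. \<Sum>\<sigma>\<in>{\<sigma>. \<sigma> permutes insert e A}. if \<sigma> e = b then G \<sigma> else 0)"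
    by (rule sum.swap)
  also have "\<dots> = (\<Sum>b\<in>insert e A. \<Sum>\<sigma>\<in>{\<sigma>. \<sigma> permutes insert e A \<and> \<sigma> e = b}. G \<sigma>)"
    by (rule sum.cong[OF refl], subst sum.inter_filter[symmetric, OF fin]) (simp add: Collect_conj_eq)
  also have "\<dots> = (\<Sum>b\<in>insert e A. \<Sum>p\<in>{p. p permutes A}. G (transpose e b \<circ> p))"
    by (rule sum.cong[OF refl], rule sum_perm_fix[OF assms(2)])
  finally show ?thesis .
qed

definition FS :: "nat \<Rightarrow> nat set \<Rightarrow> (nat \<Rightarrow> nat) set" where
  "FS d A = {x. (\<forall>k\<in>A. x k < d) \<and> (\<forall>k. k \<notin> A \<longrightarrow> x k = 0)}"

lemma FS_insert:
  assumes "e \<notin> A"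
  shows "FS d (insert e A) = (\<lambda>(j,x). x(e:=j)) ` ({0..<d} \<times> FS d A)"
proof (intro equalityI subsetI)
  fix y assume y: "y \<in> FS d (insert e A)"
  have y1: "\<forall>k\<in>insert e A. y k < d" and y2: "\<forall>k. k \<notin> insert e A \<longrightarrow> y k = 0"
    using y unfolding FS_def by blast+
  have "y(e:=0) \<in> FS d A" unfolding FS_def mem_Collect_eq
  proof (intro conjI allI ballI impI)
    fix k assume "k \<in> A" thus "(y(e:=0)) k < d" using y1 by simp
  next
    fix k assume "k \<notin> A" thus "(y(e:=0)) k = 0" using y2 by simp
  qed
  moreover have "y e < d" using y1 by simp
  ultimately show "y \<in> (\<lambda>(j,x). x(e:=j)) ` ({0..<d} \<times> FS d A)"
    by (intro image_eqI[where x="(y e, y(e:=0))"]) simp_all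
next
  fix y assume "y \<in> (\<lambda>(j,x). x(e:=j)) ` ({0..<d} \<times> FS d A)"
  then obtain j x where y: "y = x(e:=j)" "j < d" "x \<in> FS d A" by auto
  have x1: "\<forall>k\<in>A. x k < d" and x2: "\<forall>k. k \<notin> A \<longrightarrow> x k = 0"
    using y(3) unfolding FS_def by blast+
  show "y \<in> FS d (insert e A)" unfolding FS_def mem_Collect_eq
  proof (intro conjI allI ballI impI)
    fix k assume "k \<in> insert e A" thus "y k < d" using x1 y(1,2) by auto
  next
    fix k assume "k \<notin> insert e A" thus "y k = 0" using x2 y(1) by simp
  qed
qed

lemma FS_inj:
  assumes "e \<notin> A"
  shows "inj_on (\<lambda>(j,x). x(e:=j)) ({0..<d} \<times> FS d A)"
proof (rule inj_onI, clarsimp)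
  fix j x j' x' assume h: "x \<in> FS d A" "x' \<in> FS d A" "x(e := j) = x'(e := j')"
  have "j = j'" using fun_cong[OF h(3), of e] by simp
  moreover have "x = x'"
  proof
    fix k show "x k = x' k" using fun_cong[OF h(3), of k] h(1,2) assms
      by (cases "k = e") (auto simp: FS_def)
  qed
  ultimately show "j = j' \<and> x = x'" by simp
qed

lemma FS_finite: "finite A \<Longrightarrow> finite (FS d A)"
proof (induction A rule: finite_induct)
  case empty
  have "FS d {} = {\<lambda>_. 0}" by (auto simp: FS_def)
  thus ?case by simp
next
  case (insert e A) thus ?case by (simp add: FS_insert)
qed

lemma sum_FS_insert:
  assumes "e \<notin> A"
  shows "(\<Sum>y\<in>FS d (insert e A). h y) = (\<Sum>j<d. \<Sum>x\<in>FS d A. h (x(e:=j)))"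
proof -
  have "(\<Sum>y\<in>FS d (insert e A). h y) = (\<Sum>z\<in>{0..<d} \<times> FS d A. h ((\<lambda>(j,x). x(e:=j)) z))"
    unfolding FS_insert[OF assms] by (subst sum.reindex[OF FS_inj[OF assms]]) simp
  also have "\<dots> = (\<Sum>j\<in>{0..<d}. \<Sum>x\<in>FS d A. h (x(e:=j)))"
    by (subst sum.cartesian_product) (simp add: case_prod_beta')
  finally show ?thesis by (simp add: lessThan_atLeast0)
qed

definition g :: "nat \<Rightarrow> nat set \<Rightarrow> (nat \<Rightarrow> nat) \<Rightarrow> nat" where
  "g d A \<sigma> = (\<Sum>x\<in>FS d A. if \<forall>k\<in>A. x (\<sigma> k) = x k then 1 else 0)"

lemma cond_step:
  assumes "e \<notin> A" "p permutes A" "b \<in> insert e A"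
  shows "(\<forall>k\<in>insert e A. (x(e:=j)) ((transpose e b \<circ> p) k) = (x(e:=j)) k)
     \<longleftrightarrow> (b = e \<or> j = x b) \<and> (\<forall>k\<in>A. x (p k) = x k)"
proof -
  have pe: "p e = e" using assms by (simp add: permutes_not_in)
  have pA: "\<And>k. k \<in> A \<Longrightarrow> p k \<in> A" using assms(2) by (simp add: permutes_in_image)
  have ke: "\<And>k. k \<in> A \<Longrightarrow> k \<noteq> e" using assms(1) by auto
  show ?thesis
  proof
    assume H: "\<forall>k\<in>insert e A. (x(e:=j)) ((transpose e b \<circ> p) k) = (x(e:=j)) k"
    have 1: "b = e \<or> j = x b" using H[rule_format, of e] pe by (auto split: if_splits)
    have "x (p k) = x k" if k: "k \<in> A" for k
    proof -
      have h: "(x(e:=j)) (transpose e b (p k)) = x k" using H[rule_format, of k] k ke[OF k] by simp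
      show ?thesis
      proof (cases "p k = b")
        case True
        then show ?thesis using h 1 ke[OF pA[OF k]] by auto
      next
        case False
        then show ?thesis using h ke[OF pA[OF k]] by (simp add: transpose_def)
      qed
    qed
    thus "(b = e \<or> j = x b) \<and> (\<forall>k\<in>A. x (p k) = x k)" using 1 by auto
  next
    assume H: "(b = e \<or> j = x b) \<and> (\<forall>k\<in>A. x (p k) = x k)"
    show "\<forall>k\<in>insert e A. (x(e:=j)) ((transpose e b \<circ> p) k) = (x(e:=j)) k"
    proof
      fix k assume k: "k \<in> insert e A"
      show "(x(e:=j)) ((transpose e b \<circ> p) k) = (x(e:=j)) k"
      proof (cases "k = e")
        case True thus ?thesis using pe H by auto
      next
        case False
        hence kA: "k \<in> A" using k by auto
        show ?thesis
        proof (cases "p k = b")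
          case True thus ?thesis using H kA ke[OF pA[OF kA]] False by auto
        next
          case F2: False thus ?thesis using H kA ke[OF pA[OF kA]] False by (simp add: transpose_def)
        qed
      qed
    qed
  qed
qed

lemma g_step:
  assumes "finite A" "e \<notin> A" "p permutes A" "b \<in> insert e A"
  shows "g d (insert e A) (transpose e b \<circ> p) = (if b = e then d else 1) * g d A p"
proof -
  have "g d (insert e A) (transpose e b \<circ> p) =
     (\<Sum>j<d. \<Sum>x\<in>FS d A. if (b = e \<or> j = x b) \<and> (\<forall>k\<in>A. x (p k) = x k) then 1 else 0)"
    unfolding g_def sum_FS_insert[OF assms(2)] by (simp only: cond_step[OF assms(2-4)])
  also have "\<dots> = (\<Sum>x\<in>FS d A. \<Sum>j<d. if (b = e \<or> j = x b) \<and> (\<forall>k\<in>A. x (p k) = x k) then 1 else 0)"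
    by (rule sum.swap)
  also have "\<dots> = (\<Sum>x\<in>FS d A. (if b = e then d else 1) * (if \<forall>k\<in>A. x (p k) = x k then 1 else 0))"
  proof (rule sum.cong[OF refl])
    fix x assume x: "x \<in> FS d A"
    show "(\<Sum>j<d. if (b = e \<or> j = x b) \<and> (\<forall>k\<in>A. x (p k) = x k) then 1 else 0) =
          (if b = e then d else 1) * (if \<forall>k\<in>A. x (p k) = x k then 1 else 0)"
    proof (cases "b = e")
      case True thus ?thesis by simp
    next
      case False
      hence "x b < d" using x assms(4) by (auto simp: FS_def)
      thus ?thesis using False by (simp add: sum.delta')
    qed
  qed
  also have "\<dots> = (if b = e then d else 1) * g d A p" by (simp add: g_def sum_distrib_left)
  finally show ?thesis .
qed

lemma g_total:
  assumes "finite A"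
  shows "(\<Sum>p\<in>{p. p permutes A}. g d A p) = pochhammer d (card A)"
  using assms
proof (induction A rule: finite_induct)
  case empty
  have "FS d {} = {\<lambda>_. 0}" by (auto simp: FS_def)
  thus ?case by (simp add: g_def)
next
  case (insert e A)
  have "(\<Sum>p\<in>{p. p permutes insert e A}. g d (insert e A) p) =
        (\<Sum>b\<in>insert e A. \<Sum>p\<in>{p. p permutes A}. (if b = e then d else 1) * g d A p)"
    unfolding sum_perm_insert[OF insert(1,2)]
    by (intro sum.cong refl, rule g_step[OF insert(1,2)]) auto
  also have "\<dots> = (\<Sum>b\<in>insert e A. (if b = e then d else 1)) * pochhammer d (card A)"
    by (simp add: sum_distrib_left[symmetric] insert.IH sum_distrib_right)
  also have "(\<Sum>b\<in>insert e A. (if b = e then d else 1)) = d + card A"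
  proof -
    have "(\<Sum>b\<in>A. (if b = e then d else 1)) = (\<Sum>b\<in>A. 1)"
      using insert(2) by (intro sum.cong) auto
    thus ?thesis using insert(1,2) by simp
  qed
  finally show ?case using insert(1,2) by (simp add: pochhammer_Suc algebra_simps)
qed


lemma basis_FS: "basis d N = FS d {0..N}"
  unfolding basis_def FS_def by auto

lemma finite_basis: "finite (basis d N)"
  unfolding basis_FS by (rule FS_finite) simp

lemma T_a:
  assumes a: "a \<in> {1..N}" and i: "i \<in> {1..N}"
  shows "(\<Sum>\<tau>\<in>Sigma_set N a i. g d {0..N} \<tau>) = (if a = i then d else 1) * pochhammer d (N - 1)"
proof -
  have I0: "{0..N} = insert 0 {1..N}" by auto
  have n0: "(0::nat) \<notin> {1..N}" by simp
  have a0: "a \<noteq> 0" using a by simp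
  have ain: "a \<in> insert 0 {1..N}" using a by simp
  have fin: "finite {\<sigma>. \<sigma> permutes insert 0 {1..N} \<and> \<sigma> 0 = a}"
    by (rule finite_subset[of _ "{\<sigma>. \<sigma> permutes insert 0 {1..N}}"]) (auto simp: finite_permutations)
  have S: "Sigma_set N a i = {\<sigma>\<in>{\<sigma>. \<sigma> permutes insert 0 {1..N} \<and> \<sigma> 0 = a}. \<sigma> i = 0}"
    unfolding Sigma_set_def I0 by auto
  have "(\<Sum>\<tau>\<in>Sigma_set N a i. g d {0..N} \<tau>) =
        (\<Sum>\<sigma>\<in>{\<sigma>. \<sigma> permutes insert 0 {1..N} \<and> \<sigma> 0 = a}. if \<sigma> i = 0 then g d (insert 0 {1..N}) \<sigma> else 0)"
    unfolding S I0 by (rule sum.inter_filter[OF fin])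
  also have "\<dots> = (\<Sum>p\<in>{p. p permutes {1..N}}. if (transpose 0 a \<circ> p) i = 0
                   then g d (insert 0 {1..N}) (transpose 0 a \<circ> p) else 0)"
    by (rule sum_perm_fix[OF n0 ain])
  also have "\<dots> = (\<Sum>p\<in>{p. p permutes {1..N}}. if p i = a then g d {1..N} p else 0)"
  proof (rule sum.cong[OF refl])
    fix p assume p: "p \<in> {p. p permutes {1..N}}"
    hence pi: "p i \<in> {1..N}" using i permutes_in_image[of p "{1..N}" i] by auto
    have e1: "(transpose 0 a \<circ> p) i = 0 \<longleftrightarrow> p i = a"
      using pi a0 by (auto simp: transpose_def)
    have e2: "g d (insert 0 {1..N}) (transpose 0 a \<circ> p) = g d {1..N} p"
      using g_step[of "{1..N}" 0 p a d] p ain a0 by simp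
    show "(if (transpose 0 a \<circ> p) i = 0 then g d (insert 0 {1..N}) (transpose 0 a \<circ> p) else 0)
        = (if p i = a then g d {1..N} p else 0)" using e1 e2 by simp
  qed
  also have "\<dots> = (\<Sum>p\<in>{p. p permutes insert i ({1..N} - {i}) \<and> p i = a}. g d (insert i ({1..N} - {i})) p)"
  proof -
    have I1: "insert i ({1..N} - {i}) = {1..N}" using i by auto
    have fin2: "finite {p. p permutes {1..N}}" by (simp add: finite_permutations)
    show ?thesis unfolding I1 using sum.inter_filter[OF fin2, of "\<lambda>p. g d {1..N} p" "\<lambda>p. p i = a"]
      by simp
  qed
  also have "\<dots> = (\<Sum>q\<in>{q. q permutes ({1..N} - {i})}. g d (insert i ({1..N} - {i})) (transpose i a \<circ> q))"
    by (rule sum_perm_fix) (use a i in auto)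
  also have "\<dots> = (\<Sum>q\<in>{q. q permutes ({1..N} - {i})}. (if a = i then d else 1) * g d ({1..N} - {i}) q)"
    by (rule sum.cong[OF refl], subst g_step) (use a i in auto)
  also have "\<dots> = (if a = i then d else 1) * pochhammer d (card ({1..N} - {i}))"
    by (simp add: sum_distrib_left[symmetric] g_total)
  also have "card ({1..N} - {i}) = N - 1" using i by simp
  finally show ?thesis .
qed


lemma perm_ne0:
  assumes "\<sigma> permutes S" "\<sigma> b = 0" "k \<noteq> b"
  shows "\<sigma> k \<noteq> 0"
  using permutes_inj[OF assms(1)] assms(2,3) by (metis injD)

lemma pt_char:
  assumes s: "\<sigma> permutes {0..N}" and s0: "\<sigma> 0 = a" and sb: "\<sigma> b = 0" and b0: "b \<noteq> 0"
    and x: "x \<in> basis d N" and z: "z \<in> basis d N"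
  shows "ptrans (perm_op \<sigma>) x z = (if x a = x 0 \<and> z 0 = z b \<and> (\<forall>k\<in>{1..N}-{b}. x (\<sigma> k) = z k) then 1 else 0)"
proof -
  have a0: "a \<noteq> 0" using perm_ne0[OF s sb, of 0] b0 s0 by auto
  have xo: "\<And>k. k > N \<Longrightarrow> x k = 0" and zo: "\<And>k. k > N \<Longrightarrow> z k = 0"
    using x z unfolding basis_def by auto
  have so: "\<And>k. k > N \<Longrightarrow> \<sigma> k = k" using s by (intro permutes_not_in) auto
  have "(\<forall>k. (x(0 := z 0)) (\<sigma> k) = (z(0 := x 0)) k) \<longleftrightarrow>
        (x a = x 0 \<and> z 0 = z b \<and> (\<forall>k\<in>{1..N}-{b}. x (\<sigma> k) = z k))"
  proof
    assume H: "\<forall>k. (x(0 := z 0)) (\<sigma> k) = (z(0 := x 0)) k"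
    have 1: "x a = x 0" using H[rule_format, of 0] s0 a0 by simp
    have 2: "z 0 = z b" using H[rule_format, of b] sb b0 by simp
    have 3: "x (\<sigma> k) = z k" if "k \<in> {1..N}-{b}" for k
      using H[rule_format, of k] perm_ne0[OF s sb, of k] that by auto
    show "x a = x 0 \<and> z 0 = z b \<and> (\<forall>k\<in>{1..N}-{b}. x (\<sigma> k) = z k)" using 1 2 3 by blast
  next
    assume H: "x a = x 0 \<and> z 0 = z b \<and> (\<forall>k\<in>{1..N}-{b}. x (\<sigma> k) = z k)"
    show "\<forall>k. (x(0 := z 0)) (\<sigma> k) = (z(0 := x 0)) k"
    proof
      fix k
      consider "k = 0" | "k = b" | "k \<in> {1..N}-{b}" | "k > N" by force
      thus "(x(0 := z 0)) (\<sigma> k) = (z(0 := x 0)) k"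
      proof cases
        case 1 thus ?thesis using H s0 a0 by simp
      next
        case 2 thus ?thesis using H sb b0 by simp
      next
        case 3 thus ?thesis using H perm_ne0[OF s sb, of k] by auto
      next
        case 4 thus ?thesis using so[OF 4] xo[OF 4] zo[OF 4] by simp
      qed
    qed
  qed
  thus ?thesis unfolding ptrans_def perm_op_def by simp
qed

lemma omega_sum:
  fixes f :: "(nat \<Rightarrow> nat) \<Rightarrow> complex"
  assumes y: "y \<in> basis d N" and i: "i \<in> {1..N}"
  shows "(\<Sum>z\<in>basis d N. f z * omega_op i z y) = (if y 0 = y i then (\<Sum>j<d. f (y(0:=j, i:=j))) else 0)"
proof -
  let ?c = "\<lambda>z. z 0 = z i \<and> y 0 = y i \<and> (\<forall>k. k \<noteq> 0 \<and> k \<noteq> i \<longrightarrow> z k = y k)"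
  have "(\<Sum>z\<in>basis d N. f z * omega_op i z y) = (\<Sum>z\<in>basis d N. if ?c z then f z else 0)"
    by (rule sum.cong) (auto simp: omega_op_def)
  also have "\<dots> = (\<Sum>z\<in>{z\<in>basis d N. ?c z}. f z)"
    by (rule sum.inter_filter[symmetric, OF finite_basis])
  also have "\<dots> = (if y 0 = y i then (\<Sum>j<d. f (y(0:=j, i:=j))) else 0)"
  proof (cases "y 0 = y i")
    case False thus ?thesis by simp
  next
    case True
    have i0: "i \<noteq> 0" using i by simp
    have yb: "\<And>k. k \<le> N \<Longrightarrow> y k < d" "\<And>k. k > N \<Longrightarrow> y k = 0" using y unfolding basis_def by auto
    have E: "{z\<in>basis d N. ?c z} = (\<lambda>j. y(0:=j, i:=j)) ` {..<d}"
    proof (intro equalityI subsetI)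
      fix z assume z: "z \<in> {z\<in>basis d N. ?c z}"
      have zb: "z \<in> basis d N" and zc: "z 0 = z i" "\<forall>k. k \<noteq> 0 \<and> k \<noteq> i \<longrightarrow> z k = y k"
        using z by blast+
      have "z 0 < d" using zb unfolding basis_def by simp
      moreover have "z = y(0 := z 0, i := z 0)"
      proof
        fix k show "z k = (y(0 := z 0, i := z 0)) k"
          using zc by (simp add: fun_upd_def)
      qed
      ultimately show "z \<in> (\<lambda>j. y(0:=j, i:=j)) ` {..<d}" by blast
    next
      fix z assume "z \<in> (\<lambda>j. y(0:=j, i:=j)) ` {..<d}"
      then obtain j where j: "j < d" "z = y(0:=j, i:=j)" by auto
      have "z \<in> basis d N" unfolding basis_def mem_Collect_eq
      proof (intro conjI allI impI)
        fix k assume "k \<le> N" thus "z k < d" using j yb(1)[of k] by (simp add: fun_upd_def)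
      next
        fix k assume "N < k" thus "z k = 0" using j yb(2)[of k] i by (simp add: fun_upd_def)
      qed
      thus "z \<in> {z\<in>basis d N. ?c z}" using j True i0 by auto
    qed
    have inj: "inj_on (\<lambda>j. y(0:=j, i:=j)) {..<d}"
    proof (rule inj_onI)
      fix j j' assume "y(0:=j, i:=j) = y(0:=j', i:=j')"
      from fun_cong[OF this, of 0] i0 show "j = j'" by simp
    qed
    show ?thesis unfolding E using True by (simp add: sum.reindex[OF inj])
  qed
  finally show ?thesis .
qed


lemma zj_basis:
  assumes y: "y \<in> basis d N" and i: "i \<in> {1..N}" and j: "j < d"
  shows "y(0:=j, i:=j) \<in> basis d N"
proof -
  have yb: "\<And>k. k \<le> N \<Longrightarrow> y k < d" "\<And>k. k > N \<Longrightarrow> y k = 0" using y unfolding basis_def by auto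
  show ?thesis unfolding basis_def mem_Collect_eq
  proof (intro conjI allI impI)
    fix k assume "k \<le> N" thus "(y(0:=j, i:=j)) k < d" using j yb(1)[of k] by (simp add: fun_upd_def)
  next
    fix k assume "N < k" thus "(y(0:=j, i:=j)) k = 0" using j yb(2)[of k] i by (simp add: fun_upd_def)
  qed
qed

lemma tau_facts:
  assumes s: "\<sigma> \<in> Sigma_set N a b" and b: "b \<in> {1..N}" and i: "i \<in> {1..N}"
  shows "\<sigma> \<circ> transpose b i permutes {0..N}" "(\<sigma> \<circ> transpose b i) 0 = a" "(\<sigma> \<circ> transpose b i) i = 0"
    "(\<sigma> \<circ> transpose b i) b = \<sigma> i" "\<And>k. k \<noteq> b \<Longrightarrow> k \<noteq> i \<Longrightarrow> (\<sigma> \<circ> transpose b i) k = \<sigma> k"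
proof -
  have sp: "\<sigma> permutes {0..N}" "\<sigma> 0 = a" "\<sigma> b = 0" using s unfolding Sigma_set_def by auto
  show "\<sigma> \<circ> transpose b i permutes {0..N}"
    by (rule permutes_compose[OF permutes_swap_id sp(1)]) (use b i in auto)
  show "(\<sigma> \<circ> transpose b i) 0 = a" using b i sp by simp
  show "(\<sigma> \<circ> transpose b i) i = 0" using b i sp by simp
  show "(\<sigma> \<circ> transpose b i) b = \<sigma> i" by simp
  show "\<And>k. k \<noteq> b \<Longrightarrow> k \<noteq> i \<Longrightarrow> (\<sigma> \<circ> transpose b i) k = \<sigma> k" by simp
qed

lemma key:
  assumes s: "\<sigma> \<in> Sigma_set N a b" and a: "a \<in> {1..N}" and b: "b \<in> {1..N}" and i: "i \<in> {1..N}"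
    and x: "x \<in> basis d N" and y: "y \<in> basis d N"
  shows "(\<Sum>z\<in>basis d N. ptrans (perm_op \<sigma>) x z * omega_op i z y) =
         complex_of_real (if b = i then real d else 1) * ptrans (perm_op (\<sigma> \<circ> transpose b i)) x y"
proof -
  have sp: "\<sigma> permutes {0..N}" "\<sigma> 0 = a" "\<sigma> b = 0" using s unfolding Sigma_set_def by auto
  have b0: "b \<noteq> 0" and i0: "i \<noteq> 0" using b i by auto
  note T = tau_facts[OF s b i]
  let ?t = "\<sigma> \<circ> transpose b i"
  have PT: "ptrans (perm_op ?t) x y = (if x a = x 0 \<and> y 0 = y i \<and> (\<forall>k\<in>{1..N}-{i}. x (?t k) = y k) then 1 else 0)"
    by (rule pt_char[OF T(1) T(2) T(3) i0 x y])
  show ?thesis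
  proof (cases "y 0 = y i")
    case False
    thus ?thesis unfolding omega_sum[OF y i] PT by simp
  next
    case True
    have zb: "\<And>j. j < d \<Longrightarrow> y(0:=j, i:=j) \<in> basis d N" using zj_basis[OF y i] .
    have PZ: "\<And>j. j < d \<Longrightarrow> ptrans (perm_op \<sigma>) x (y(0:=j, i:=j)) =
       (if x a = x 0 \<and> (y(0:=j, i:=j)) 0 = (y(0:=j, i:=j)) b \<and> (\<forall>k\<in>{1..N}-{b}. x (\<sigma> k) = (y(0:=j, i:=j)) k) then 1 else 0)"
      by (rule pt_char[OF sp b0 x zb])
    show ?thesis
    proof (cases "b = i")
      case bi: True
      have "\<And>j. j < d \<Longrightarrow> ptrans (perm_op \<sigma>) x (y(0:=j, i:=j)) = ptrans (perm_op ?t) x y"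
        unfolding PT using bi i0 True by (subst PZ) (auto simp: fun_upd_def)
      thus ?thesis unfolding omega_sum[OF y i] using True bi by simp
    next
      case bi: False
      have yb: "y b < d" using y b unfolding basis_def by auto
      let ?C = "x a = x 0 \<and> y 0 = y i \<and> (\<forall>k\<in>{1..N}-{i}. x (?t k) = y k)"
      have E: "ptrans (perm_op \<sigma>) x (y(0:=j, i:=j)) = (if j = y b \<and> ?C then 1 else 0)" if j: "j < d" for j
      proof -
        have "(x a = x 0 \<and> (y(0:=j, i:=j)) 0 = (y(0:=j, i:=j)) b \<and> (\<forall>k\<in>{1..N}-{b}. x (\<sigma> k) = (y(0:=j, i:=j)) k))
              \<longleftrightarrow> (j = y b \<and> ?C)"
        proof
          assume H: "x a = x 0 \<and> (y(0:=j, i:=j)) 0 = (y(0:=j, i:=j)) b \<and> (\<forall>k\<in>{1..N}-{b}. x (\<sigma> k) = (y(0:=j, i:=j)) k)"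
          have jb: "j = y b" using H bi b0 i0 by simp
          have "x (?t k) = y k" if k: "k \<in> {1..N}-{i}" for k
          proof (cases "k = b")
            case True
            have "x (\<sigma> i) = (y(0:=j, i:=j)) i" using H i bi by auto
            thus ?thesis using True T(4) jb by simp
          next
            case False
            have "x (\<sigma> k) = (y(0:=j, i:=j)) k" using H k False by auto
            thus ?thesis using False k T(5)[of k] by auto
          qed
          thus "j = y b \<and> ?C" using jb H True by auto
        next
          assume H: "j = y b \<and> ?C"
          have "x (\<sigma> k) = (y(0:=j, i:=j)) k" if k: "k \<in> {1..N}-{b}" for k
          proof (cases "k = i")
            case True
            have "b \<in> {1..N}-{i}" using b bi by simp
            hence "x (?t b) = y b" using H by blast
            thus ?thesis using True T(4) H by simp
          next
            case False
            have "k \<in> {1..N}-{i}" using k False by simp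
            hence "x (?t k) = y k" using H by blast
            thus ?thesis using False k T(5)[of k] by auto
          qed
          thus "x a = x 0 \<and> (y(0:=j, i:=j)) 0 = (y(0:=j, i:=j)) b \<and> (\<forall>k\<in>{1..N}-{b}. x (\<sigma> k) = (y(0:=j, i:=j)) k)"
            using H bi b0 i0 by auto
        qed
        thus ?thesis using PZ[OF j] by simp
      qed
      have "(\<Sum>j<d. ptrans (perm_op \<sigma>) x (y(0:=j, i:=j))) = (\<Sum>j<d. if j = y b \<and> ?C then 1 else 0)"
        using E by simp
      also have "\<dots> = (\<Sum>j<d. if j = y b then (if ?C then 1 else 0) else 0)"
        by (rule sum.cong) auto
      also have "\<dots> = (if ?C then 1 else 0)" using yb by (simp only: sum.delta finite_lessThan) simp
      finally show ?thesis unfolding omega_sum[OF y i] PT using True bi by simp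
    qed
  qed
qed


lemma reindex_set:
  assumes b: "b \<in> {1..N}" and i: "i \<in> {1..N}"
  shows "(\<lambda>\<sigma>. \<sigma> \<circ> transpose b i) ` Sigma_set N a b = Sigma_set N a i"
proof (intro equalityI subsetI)
  fix \<tau> assume "\<tau> \<in> (\<lambda>\<sigma>. \<sigma> \<circ> transpose b i) ` Sigma_set N a b"
  then obtain \<sigma> where s: "\<sigma> \<in> Sigma_set N a b" "\<tau> = \<sigma> \<circ> transpose b i" by auto
  show "\<tau> \<in> Sigma_set N a i" using tau_facts[OF s(1) b i] s(2) unfolding Sigma_set_def by simp
next
  fix \<tau> assume t: "\<tau> \<in> Sigma_set N a i"
  have "\<tau> \<circ> transpose i b \<in> Sigma_set N a b" using tau_facts[OF t i b] unfolding Sigma_set_def by simp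
  moreover have "\<tau> = (\<tau> \<circ> transpose i b) \<circ> transpose b i"
    by (simp add: o_assoc[symmetric] transpose_commute[of i b])
  ultimately show "\<tau> \<in> (\<lambda>\<sigma>. \<sigma> \<circ> transpose b i) ` Sigma_set N a b" by blast
qed

lemma reindex_inj: "inj_on (\<lambda>\<sigma>. \<sigma> \<circ> transpose b i) S"
proof (rule inj_onI)
  fix p q assume "p \<circ> transpose b i = q \<circ> transpose b i"
  hence "(p \<circ> transpose b i) \<circ> transpose b i = (q \<circ> transpose b i) \<circ> transpose b i" by simp
  thus "p = q" by (simp only: o_assoc[symmetric] transpose_comp_involutory o_id)
qed

lemma weight_sum:
  fixes \<beta> :: "nat \<Rightarrow> real" and N i d :: nat
  assumes i: "i \<in> {1..N}"
  shows "(\<Sum>b\<in>{1..N}. \<beta> b * (if b = i then real d else 1)) = (real d - 1) * \<beta> i + (\<Sum>b\<in>{1..N}. \<beta> b)"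
proof -
  have "(\<Sum>b\<in>{1..N}. \<beta> b * (if b = i then real d else 1)) = (\<Sum>b\<in>{1..N}. \<beta> b + (if b = i then (real d - 1) * \<beta> b else 0))"
    by (rule sum.cong) (auto simp: algebra_simps)
  also have "\<dots> = (\<Sum>b\<in>{1..N}. \<beta> b) + (real d - 1) * \<beta> i"
  proof -
    have "(\<Sum>b\<in>{1..N}. if b = i then (real d - 1) * \<beta> b else 0) = (real d - 1) * \<beta> i"
      using i by (subst sum.delta) auto
    thus ?thesis by (simp add: sum.distrib)
  qed
  finally show ?thesis by simp
qed

lemma swap3:
  "(\<Sum>z\<in>B. \<Sum>a\<in>A. \<Sum>b\<in>A'. \<Sum>s\<in>S a b. F a b s z) = (\<Sum>a\<in>A. \<Sum>b\<in>A'. \<Sum>s\<in>S a b. \<Sum>z\<in>B. F a b s z)"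
proof -
  have "(\<Sum>z\<in>B. \<Sum>a\<in>A. \<Sum>b\<in>A'. \<Sum>s\<in>S a b. F a b s z) = (\<Sum>a\<in>A. \<Sum>z\<in>B. \<Sum>b\<in>A'. \<Sum>s\<in>S a b. F a b s z)"
    by (rule sum.swap)
  also have "\<dots> = (\<Sum>a\<in>A. \<Sum>b\<in>A'. \<Sum>z\<in>B. \<Sum>s\<in>S a b. F a b s z)"
    by (rule sum.cong[OF refl], rule sum.swap)
  also have "\<dots> = (\<Sum>a\<in>A. \<Sum>b\<in>A'. \<Sum>s\<in>S a b. \<Sum>z\<in>B. F a b s z)"
    by (rule sum.cong[OF refl], rule sum.cong[OF refl], rule sum.swap)
  finally show ?thesis .
qed

lemma swap2:
  "(\<Sum>z\<in>B. \<Sum>a\<in>A. \<Sum>s\<in>S a. F a s z) = (\<Sum>a\<in>A. \<Sum>s\<in>S a. \<Sum>z\<in>B. F a s z)"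
proof -
  have "(\<Sum>z\<in>B. \<Sum>a\<in>A. \<Sum>s\<in>S a. F a s z) = (\<Sum>a\<in>A. \<Sum>z\<in>B. \<Sum>s\<in>S a. F a s z)"
    by (rule sum.swap)
  also have "\<dots> = (\<Sum>a\<in>A. \<Sum>s\<in>S a. \<Sum>z\<in>B. F a s z)"
    by (rule sum.cong[OF refl], rule sum.swap)
  finally show ?thesis .
qed

lemma part1:
  assumes i: "i \<in> {1..N}" and x: "x \<in> basis d N" and y: "y \<in> basis d N"
  shows "opmul d N (Ctilde N \<beta>) (omega_op i) x y
          = (\<Sum>a\<in>{1..N}. \<Sum>\<sigma>\<in>Sigma_set N a i.
               complex_of_real (\<beta> a * ((real d - 1) * \<beta> i + (\<Sum>b\<in>{1..N}. \<beta> b)) / fact (N - 1))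
               * ptrans (perm_op \<sigma>) x y)"
proof -
  define c where "c a b = complex_of_real (\<beta> a * \<beta> b / fact (N - 1))" for a b
  define P where "P \<sigma> z = ptrans (perm_op \<sigma>) x z" for \<sigma> z
  define w where "w b = (if b = i then real d else 1)" for b
  define S where "S a = (\<Sum>\<tau>\<in>Sigma_set N a i. P \<tau> y)" for a
  have "opmul d N (Ctilde N \<beta>) (omega_op i) x y =
        (\<Sum>z\<in>basis d N. \<Sum>a\<in>{1..N}. \<Sum>b\<in>{1..N}. \<Sum>\<sigma>\<in>Sigma_set N a b. c a b * (P \<sigma> z * omega_op i z y))"
    unfolding opmul_def Ctilde_def c_def P_def by (simp add: sum_distrib_right mult.assoc)
  also have "\<dots> = (\<Sum>a\<in>{1..N}. \<Sum>b\<in>{1..N}. \<Sum>\<sigma>\<in>Sigma_set N a b. \<Sum>z\<in>basis d N. c a b * (P \<sigma> z * omega_op i z y))"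
    by (rule swap3)
  also have "\<dots> = (\<Sum>a\<in>{1..N}. \<Sum>b\<in>{1..N}. \<Sum>\<sigma>\<in>Sigma_set N a b. c a b * (complex_of_real (w b) * P (\<sigma> \<circ> transpose b i) y))"
  proof (intro sum.cong refl)
    fix a b \<sigma> assume a: "a \<in> {1..N}" and b: "b \<in> {1..N}" and s: "\<sigma> \<in> Sigma_set N a b"
    show "(\<Sum>z\<in>basis d N. c a b * (P \<sigma> z * omega_op i z y)) = c a b * (complex_of_real (w b) * P (\<sigma> \<circ> transpose b i) y)"
      unfolding sum_distrib_left[symmetric] P_def w_def by (rule arg_cong[where f="\<lambda>t. c a b * t"], rule key[OF s a b i x y])
  qed
  also have "\<dots> = (\<Sum>a\<in>{1..N}. \<Sum>b\<in>{1..N}. c a b * complex_of_real (w b) * S a)"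
  proof (intro sum.cong refl)
    fix a b assume b: "b \<in> {1..N}"
    have "(\<Sum>\<sigma>\<in>Sigma_set N a b. P (\<sigma> \<circ> transpose b i) y) = S a"
      unfolding S_def reindex_set[OF b i, symmetric] by (simp add: sum.reindex[OF reindex_inj])
    thus "(\<Sum>\<sigma>\<in>Sigma_set N a b. c a b * (complex_of_real (w b) * P (\<sigma> \<circ> transpose b i) y)) = c a b * complex_of_real (w b) * S a"
      by (simp add: sum_distrib_left[symmetric] mult.assoc)
  qed
  also have "\<dots> = (\<Sum>a\<in>{1..N}. complex_of_real (\<beta> a * ((real d - 1) * \<beta> i + (\<Sum>b\<in>{1..N}. \<beta> b)) / fact (N - 1)) * S a)"
  proof (rule sum.cong[OF refl])
    fix a
    have "(\<Sum>b\<in>{1..N}. c a b * complex_of_real (w b)) = complex_of_real (\<Sum>b\<in>{1..N}. \<beta> a / fact (N - 1) * (\<beta> b * w b))"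
      unfolding c_def by (simp add: mult.assoc)
    also have "\<dots> = complex_of_real (\<beta> a / fact (N - 1) * ((real d - 1) * \<beta> i + (\<Sum>b\<in>{1..N}. \<beta> b)))"
      unfolding sum_distrib_left[symmetric] w_def weight_sum[OF i] ..
    finally show "(\<Sum>b\<in>{1..N}. c a b * complex_of_real (w b) * S a) = complex_of_real (\<beta> a * ((real d - 1) * \<beta> i + (\<Sum>b\<in>{1..N}. \<beta> b)) / fact (N - 1)) * S a"
      by (simp add: sum_distrib_right[symmetric])
  qed
  also have "\<dots> = (\<Sum>a\<in>{1..N}. \<Sum>\<sigma>\<in>Sigma_set N a i.
               complex_of_real (\<beta> a * ((real d - 1) * \<beta> i + (\<Sum>b\<in>{1..N}. \<beta> b)) / fact (N - 1))
               * ptrans (perm_op \<sigma>) x y)"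
    unfolding S_def P_def by (simp add: sum_distrib_left)
  finally show ?thesis .
qed


lemma diag_sum:
  assumes t: "\<tau> permutes {0..N}"
  shows "(\<Sum>x\<in>basis d N. ptrans (perm_op \<tau>) x x) = of_nat (g d {0..N} \<tau>)"
proof -
  have "(\<Sum>x\<in>basis d N. ptrans (perm_op \<tau>) x x) = (\<Sum>x\<in>FS d {0..N}. of_nat (if \<forall>k\<in>{0..N}. x (\<tau> k) = x k then 1 else 0))"
    unfolding basis_FS
  proof (rule sum.cong[OF refl])
    fix x assume "x \<in> FS d {0..N}"
    hence xo: "\<And>k. k > N \<Longrightarrow> x k = 0" unfolding FS_def by auto
    have so: "\<And>k. k > N \<Longrightarrow> \<tau> k = k" using t by (intro permutes_not_in) auto
    have "(\<forall>k. x (\<tau> k) = x k) \<longleftrightarrow> (\<forall>k\<in>{0..N}. x (\<tau> k) = x k)"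
    proof
      assume H: "\<forall>k\<in>{0..N}. x (\<tau> k) = x k"
      show "\<forall>k. x (\<tau> k) = x k"
      proof
        fix k show "x (\<tau> k) = x k" using H so[of k] by (cases "k \<le> N") auto
      qed
    qed simp
    thus "ptrans (perm_op \<tau>) x x = of_nat (if \<forall>k\<in>{0..N}. x (\<tau> k) = x k then 1 else 0)"
      unfolding ptrans_def perm_op_def by simp
  qed
  also have "\<dots> = of_nat (g d {0..N} \<tau>)" unfolding g_def by (simp only: of_nat_sum)
  finally show ?thesis .
qed

lemma fact_poch: "d \<ge> 1 \<Longrightarrow> fact (d - 1) * pochhammer d n = (fact (d - 1 + n) :: nat)"
proof (induction n)
  case 0 thus ?case by simp
next
  case (Suc n)
  obtain k where k: "d = Suc k" using Suc.prems by (cases d) auto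
  have "fact (d - 1 + Suc n) = (d + n) * (fact (d - 1 + n) :: nat)"
    unfolding k by (simp add: fact_Suc)
  thus ?case using Suc by (simp add: pochhammer_Suc)
qed

lemma coef_lemma:
  assumes d: "d \<ge> 2" and N: "N \<ge> 1"
  shows "real d / real ((N + d - 1) choose N) * (real (N + d - 1) / real N) * real (pochhammer d (N - 1)) / fact (N - 1) = real d"
proof -
  obtain n where n: "N = Suc n" using N by (cases N) auto
  obtain m where m: "d = Suc (Suc m)" using d by (metis add_2_eq_Suc le_Suc_ex)
  define C where "C = real ((N + d - 1) choose N)"
  define P where "P = real (pochhammer d (N - 1))"
  have n1: "fact N * fact (d - 1) * ((N + d - 1) choose N) = (fact (N + d - 1) :: nat)"
  proof -
    have "N \<le> N + d - 1" using d by simp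
    from binomial_fact_lemma[OF this] show ?thesis using d by simp
  qed
  have h1: "fact N * fact (d - 1) * C = fact (N + d - 1)"
  proof -
    have "real (fact N * fact (d - 1) * ((N + d - 1) choose N)) = real (fact (N + d - 1))" by (simp only: n1)
    thus ?thesis unfolding C_def by (simp only: of_nat_mult of_nat_fact)
  qed
  have n2: "fact (d - 1) * pochhammer d (N - 1) = (fact (N + d - 2) :: nat)"
  proof -
    have e: "N + d - 2 = d - 1 + (N - 1)" using d N by simp
    show ?thesis unfolding e by (rule fact_poch) (use d in simp)
  qed
  have h2: "fact (d - 1) * P = fact (N + d - 2)"
  proof -
    have "real (fact (d - 1) * pochhammer d (N - 1)) = real (fact (N + d - 2))" by (simp only: n2)
    thus ?thesis unfolding P_def by (simp only: of_nat_mult of_nat_fact)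
  qed
  have h3: "(fact (N + d - 1) :: real) = real (N + d - 1) * fact (N + d - 2)"
    unfolding n m by (simp add: fact_Suc)
  have h4: "(fact N :: real) = real N * fact (N - 1)" unfolding n by (simp add: fact_Suc)
  have pos: "(fact (d - 1) :: real) > 0" "(fact (N - 1) :: real) > 0" "real N > 0" "real (N + d - 1) > 0" "C > 0"
    using N d by (auto simp: C_def)
  have "C * real N * fact (N - 1) * fact (d - 1) = real (N + d - 1) * (fact (d - 1) * P)"
    using h1 h2 h3 h4 by (simp add: algebra_simps)
  hence "C * real N * fact (N - 1) = real (N + d - 1) * P" using pos(1) by (simp add: algebra_simps)
  define r where "r = real (N + d - 1)"
  have eq: "C * real N * fact (N - 1) = r * P" unfolding r_def by fact
  have rP: "r * P \<noteq> 0"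
  proof -
    have "P > 0" unfolding P_def using d by (simp add: pochhammer_pos)
    thus ?thesis using pos(4) unfolding r_def by simp
  qed
  have "real d / C * (r / real N) * P / fact (N - 1) = real d * (r * P) / (C * real N * fact (N - 1))"
    by (simp add: field_simps)
  also have "\<dots> = real d" unfolding eq using rP by simp
  finally show ?thesis unfolding C_def[symmetric] P_def[symmetric] r_def[symmetric] .
qed


theorem mainTheorem14:
  fixes d N i :: nat and \<beta> :: "nat \<Rightarrow> real"
  assumes "d \<ge> 2" and "N \<ge> 1"
    and "(real d - 1) * (\<Sum>j\<in>{1..N}. (\<beta> j)\<^sup>2) + (\<Sum>j\<in>{1..N}. \<beta> j)\<^sup>2 = 1"
    and "i \<in> {1..N}"
  shows "(\<forall>x\<in>basis d N. \<forall>y\<in>basis d N.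
            opmul d N (Ctilde N \<beta>) (omega_op i) x y
          = (\<Sum>a\<in>{1..N}. \<Sum>\<sigma>\<in>Sigma_set N a i.
               complex_of_real (\<beta> a * ((real d - 1) * \<beta> i + (\<Sum>b\<in>{1..N}. \<beta> b)) / fact (N - 1))
               * ptrans (perm_op \<sigma>) x y))
      \<and> optrace d N (opmul d N (Cbeta d N \<beta>) (omega_op i))
          = complex_of_real (real d * ((real d - 1) * \<beta> i + (\<Sum>j\<in>{1..N}. \<beta> j))\<^sup>2)"
proof
  note i = assms(4)
  show P1: "\<forall>x\<in>basis d N. \<forall>y\<in>basis d N.
            opmul d N (Ctilde N \<beta>) (omega_op i) x y
          = (\<Sum>a\<in>{1..N}. \<Sum>\<sigma>\<in>Sigma_set N a i.
               complex_of_real (\<beta> a * ((real d - 1) * \<beta> i + (\<Sum>b\<in>{1..N}. \<beta> b)) / fact (N - 1))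
               * ptrans (perm_op \<sigma>) x y)"
    using part1[OF i] by blast
  define K where "K = (real d - 1) * \<beta> i + (\<Sum>b\<in>{1..N}. \<beta> b)"
  define coef where "coef = real d / real ((N + d - 1) choose N) * (real (N + d - 1) / real N)"
  define Pc where "Pc = pochhammer d (N - 1)"
  have "optrace d N (opmul d N (Cbeta d N \<beta>) (omega_op i)) =
        (\<Sum>x\<in>basis d N. complex_of_real coef * opmul d N (Ctilde N \<beta>) (omega_op i) x x)"
    unfolding optrace_def opmul_def Cbeta_def coef_def by (simp add: sum_distrib_left mult.assoc)
  also have "\<dots> = complex_of_real coef * (\<Sum>x\<in>basis d N. \<Sum>a\<in>{1..N}. \<Sum>\<sigma>\<in>Sigma_set N a i.
               complex_of_real (\<beta> a * K / fact (N - 1)) * ptrans (perm_op \<sigma>) x x)"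
  proof -
    have "(\<Sum>x\<in>basis d N. opmul d N (Ctilde N \<beta>) (omega_op i) x x) = (\<Sum>x\<in>basis d N. \<Sum>a\<in>{1..N}. \<Sum>\<sigma>\<in>Sigma_set N a i.
               complex_of_real (\<beta> a * K / fact (N - 1)) * ptrans (perm_op \<sigma>) x x)"
      unfolding K_def by (rule sum.cong[OF refl]) (use P1 in blast)
    thus ?thesis by (simp only: sum_distrib_left[symmetric])
  qed
  also have "\<dots> = complex_of_real coef * (\<Sum>a\<in>{1..N}. \<Sum>\<sigma>\<in>Sigma_set N a i.
               complex_of_real (\<beta> a * K / fact (N - 1)) * (\<Sum>x\<in>basis d N. ptrans (perm_op \<sigma>) x x))"
    by (simp only: swap2 sum_distrib_left)
  also have "\<dots> = complex_of_real coef * (\<Sum>a\<in>{1..N}.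
               complex_of_real (\<beta> a * K / fact (N - 1)) * of_nat (\<Sum>\<sigma>\<in>Sigma_set N a i. g d {0..N} \<sigma>))"
  proof -
    have "\<And>a \<sigma>. \<sigma> \<in> Sigma_set N a i \<Longrightarrow> (\<Sum>x\<in>basis d N. ptrans (perm_op \<sigma>) x x) = of_nat (g d {0..N} \<sigma>)"
      by (rule diag_sum) (simp add: Sigma_set_def)
    thus ?thesis by (simp add: sum_distrib_left)
  qed
  also have "\<dots> = complex_of_real coef * (\<Sum>a\<in>{1..N}.
               complex_of_real (\<beta> a * K / fact (N - 1)) * of_nat ((if a = i then d else 1) * Pc))"
    unfolding Pc_def using T_a[OF _ i] by simp
  also have "\<dots> = complex_of_real (coef * (\<Sum>a\<in>{1..N}. \<beta> a * K / fact (N - 1) * real ((if a = i then d else 1) * Pc)))"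
    by simp
  also have "(\<Sum>a\<in>{1..N}. \<beta> a * K / fact (N - 1) * real ((if a = i then d else 1) * Pc))
           = K * real Pc / fact (N - 1) * (\<Sum>a\<in>{1..N}. \<beta> a * (if a = i then real d else 1))"
    by (simp add: sum_distrib_left) (rule sum.cong, auto)
  also have "(\<Sum>a\<in>{1..N}. \<beta> a * (if a = i then real d else 1)) = K"
    unfolding K_def by (rule weight_sum[OF i])
  also have "coef * (K * real Pc / fact (N - 1) * K) = (coef * real Pc / fact (N - 1)) * K\<^sup>2"
    by (simp add: power2_eq_square)
  also have "coef * real Pc / fact (N - 1) = real d"
    unfolding coef_def Pc_def using coef_lemma[OF assms(1,2)] by simp
  finally show "optrace d N (opmul d N (Cbeta d N \<beta>) (omega_op i))
          = complex_of_real (real d * ((real d - 1) * \<beta> i + (\<Sum>j\<in>{1..N}. \<beta> j))\<^sup>2)"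
    unfolding K_def .
qed

end
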